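(* Let $B^\star\in\mathbb R^{p\times q}$ have all its nonzero entries in $S_u\times S_v$, where $S_u\subseteq[p]$, $S_v\subseteq[q]$, $|S_u|=s_u$, $|S_v|=s_v$, and assume $n>\max\{s_u,s_v\}$. Assume $\sigma_{\min}((\widehat\Sigma_X)_{S_uS_u})>0$, $\sigma_{\min}((\widehat\Sigma_Y)_{S_vS_v})>0$, and, writing $G=\widehat\Sigma_{XY}-\widehat\Sigma_XB^\star\widehat\Sigma_Y$, $$\frac{\|G\|_\infty}{\rho}+\frac{2(\|G\|_\infty+\rho)}{\rho}\cdot\frac{\widehat\tau(X,Y)\sqrt{s_us_v}}{\sigma_{\min}((\widehat\Sigma_X)_{S_uS_u})\,\sigma_{\min}((\widehat\Sigma_Y)_{S_vS_v})}\le 1,$$ where $$\widehat\tau(X,Y)=\max\Big\{\|(\widehat\Sigma_X)_{S_u^cS_u}\|_{2,\infty}\|(\widehat\Sigma_Y)_{S_v^cS_v}\|_{2,\infty},\ \|(\widehat\Sigma_X)_{S_u^cS_u}\|_{2,\infty}\|(\widehat\Sigma_Y)_{S_vS_v}\|_{op},\ \|(\widehat\Sigma_X)_{S_uS_u}\|_{op}\|(\widehat\Sigma_Y)_{S_v^cS_v}\|_{2,\infty}\Big\}.$$ Then the problem $\min_{B\in\mathbb R^{p\times q}}\tfrac12\|\tfrac1nXBY^\top-I_n\|_F^2+\rho\sum_{i,j}|B_{ij}|$ has a unique minimizer $\widehat B$, and every nonzero entry $\widehat B_{ij}$ satisfies $(i,j)\in S_u\times S_v$.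
   Context: $X\in\mathbb R^{n\times p}$, $Y\in\mathbb R^{n\times q}$ are data matrices, $\widehat\Sigma_X=X^\top X/n$, $\widehat\Sigma_Y=Y^\top Y/n$, $\widehat\Sigma_{XY}=X^\top Y/n$, $\rho>0$. In the paper's application $S_u,S_v$ are the sets of nonzero rows of $U^\star,V^\star$ and $B^\star=U^\star\Lambda^\star V^{\star\top}$. For index sets $S_1,S_2$, $A_{S_1S_2}$ is the submatrix with rows in $S_1$ and columns in $S_2$; $S^c$ is the complement. $\|A\|_\infty=\max_{i,j}|A_{ij}|$, $\|A\|_{2,\infty}$ is the maximum Euclidean norm of a row of $A$, $\|A\|_{op}$ the largest singular value, $\sigma_{\min}$ the smallest singular value. *)

theory Defs
  imports "HOL-Analysis.Analysis"
begin

text \<open>Matrices are Cartesian-product types: a p x q real matrix is real^'q^'p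
  (row i is A $ i, entry (i,j) is A $ i $ j).\<close>

definition max_abs :: "real^'c^'r \<Rightarrow> real" where
  "max_abs A = Max {\<bar>A $ i $ j\<bar> | i j. True}"

definition l1_entries :: "real^'c^'r \<Rightarrow> real" where
  "l1_entries A = (\<Sum>i\<in>UNIV. \<Sum>j\<in>UNIV. \<bar>A $ i $ j\<bar>)"

definition frob_sq :: "real^'c^'r \<Rightarrow> real" where
  "frob_sq A = (\<Sum>i\<in>UNIV. \<Sum>j\<in>UNIV. (A $ i $ j)^2)"

definition norm_2inf_sub :: "real^'c^'r \<Rightarrow> 'r set \<Rightarrow> 'c set \<Rightarrow> real" where
  "norm_2inf_sub A S1 S2 =
     Max (insert 0 {sqrt (\<Sum>j\<in>S2. (A $ i $ j)^2) | i. i \<in> S1})"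

definition opnorm_sub :: "real^'c^'r \<Rightarrow> 'r set \<Rightarrow> 'c set \<Rightarrow> real" where
  "opnorm_sub A S1 S2 =
     Sup {sqrt (\<Sum>i\<in>S1. (\<Sum>j\<in>S2. A $ i $ j * x $ j)^2) | x. (\<Sum>j\<in>S2. (x $ j)^2) = 1}"

definition sigma_min_sub :: "real^'r^'r \<Rightarrow> 'r set \<Rightarrow> real" where
  "sigma_min_sub A S =
     Inf {sqrt (\<Sum>i\<in>S. (\<Sum>j\<in>S. A $ i $ j * x $ j)^2) | x. (\<Sum>j\<in>S. (x $ j)^2) = 1}"

definition cov :: "real^'a^'n \<Rightarrow> real^'b^'n \<Rightarrow> real^'b^'a" where
  "cov X Y = (1 / real CARD('n)) *\<^sub>R (transpose X ** Y)"

definition cca_obj :: "real^'p^'n \<Rightarrow> real^'q^'n \<Rightarrow> real \<Rightarrow> real^'q^'p \<Rightarrow> real" where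
  "cca_obj X Y \<rho> B =
     1/2 * frob_sq ((1 / real CARD('n)) *\<^sub>R (X ** B ** transpose Y) - mat 1)
     + \<rho> * l1_entries B"

definition tau_hat :: "real^'p^'n \<Rightarrow> real^'q^'n \<Rightarrow> 'p set \<Rightarrow> 'q set \<Rightarrow> real" where
  "tau_hat X Y Su Sv =
     Max {norm_2inf_sub (cov X X) (-Su) Su * norm_2inf_sub (cov Y Y) (-Sv) Sv,
          norm_2inf_sub (cov X X) (-Su) Su * opnorm_sub (cov Y Y) Sv Sv,
          opnorm_sub (cov X X) Su Su * norm_2inf_sub (cov Y Y) (-Sv) Sv}"

end

theory Submission
  imports Defs
begin


lemma sigma_bound:
  fixes A :: "real^'r::finite^'r" and x :: "'r \<Rightarrow> real"
  assumes "sigma_min_sub A S \<ge> 0"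
  shows "(sigma_min_sub A S)^2 * (\<Sum>j\<in>S. (x j)^2) \<le> (\<Sum>i\<in>S. (\<Sum>j\<in>S. A$i$j * x j)^2)"
proof (cases "(\<Sum>j\<in>S. (x j)^2) = 0")
  case True
  then show ?thesis by (simp add: sum_nonneg)
next
  case False
  define s where "s = (\<Sum>j\<in>S. (x j)^2)"
  have s0: "s > 0" using False unfolding s_def by (metis less_eq_real_def sum_nonneg zero_le_power2)
  define y :: "real^'r" where "y = (\<chi> j. x j / sqrt s)"
  have y1: "(\<Sum>j\<in>S. (y$j)^2) = 1"
    using s0 by (simp add: y_def power_divide sum_divide_distrib[symmetric] s_def[symmetric])
  have eq: "(\<Sum>i\<in>S. (\<Sum>j\<in>S. A$i$j * y$j)^2) = (\<Sum>i\<in>S. (\<Sum>j\<in>S. A$i$j * x j)^2) / s"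
  proof -
    have "\<And>i. (\<Sum>j\<in>S. A$i$j * y$j) = (\<Sum>j\<in>S. A$i$j * x j) / sqrt s"
      by (simp add: y_def sum_divide_distrib)
    then have "(\<Sum>i\<in>S. (\<Sum>j\<in>S. A$i$j * y$j)^2) = (\<Sum>i\<in>S. ((\<Sum>j\<in>S. A$i$j * x j) / sqrt s)^2)"
      by (intro sum.cong refl) (simp only:)
    also have "\<dots> = (\<Sum>i\<in>S. (\<Sum>j\<in>S. A$i$j * x j)^2 / s)"
      using s0 by (intro sum.cong refl) (simp only: power_divide real_sqrt_pow2 less_imp_le)
    finally show ?thesis by (simp only: sum_divide_distrib)
  qed
  have "sigma_min_sub A S \<le> sqrt (\<Sum>i\<in>S. (\<Sum>j\<in>S. A$i$j * y$j)^2)"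
    unfolding sigma_min_sub_def
  proof (rule cInf_lower)
    show "bdd_below {sqrt (\<Sum>i\<in>S. (\<Sum>j\<in>S. A $ i $ j * x $ j)\<^sup>2) |x. (\<Sum>j\<in>S. (x $ j)\<^sup>2) = 1}"
      by (rule bdd_belowI[where m=0]) (auto simp: sum_nonneg)
  qed (use y1 in auto)
  then have "(sigma_min_sub A S)^2 \<le> (\<Sum>i\<in>S. (\<Sum>j\<in>S. A$i$j * y$j)^2)"
  proof -
    have "(sigma_min_sub A S)^2 \<le> (sqrt (\<Sum>i\<in>S. (\<Sum>j\<in>S. A$i$j * y$j)^2))^2"
      using \<open>sigma_min_sub A S \<le> _\<close> assms by (rule power_mono)
    also have "\<dots> = (\<Sum>i\<in>S. (\<Sum>j\<in>S. A$i$j * y$j)^2)"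
      by (simp add: sum_nonneg)
    finally show ?thesis .
  qed
  then show ?thesis using s0 eq unfolding s_def[symmetric] by (simp add: pos_le_divide_eq mult.commute)
qed

lemma sigma_bound_mat:
  fixes A :: "real^'r::finite^'r" and N :: "'r \<Rightarrow> 'k \<Rightarrow> real"
  assumes "sigma_min_sub A S \<ge> 0"
  shows "(sigma_min_sub A S)^2 * (\<Sum>j\<in>S. \<Sum>k\<in>T. (N j k)^2) \<le> (\<Sum>i\<in>S. \<Sum>k\<in>T. (\<Sum>j\<in>S. A$i$j * N j k)^2)"
proof -
  have "(sigma_min_sub A S)^2 * (\<Sum>j\<in>S. \<Sum>k\<in>T. (N j k)^2) = (\<Sum>k\<in>T. (sigma_min_sub A S)^2 * (\<Sum>j\<in>S. (N j k)^2))"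
    by (subst sum.swap) (simp add: sum_distrib_left)
  also have "\<dots> \<le> (\<Sum>k\<in>T. \<Sum>i\<in>S. (\<Sum>j\<in>S. A$i$j * N j k)^2)"
    by (rule sum_mono) (rule sigma_bound[OF assms])
  also have "\<dots> = (\<Sum>i\<in>S. \<Sum>k\<in>T. (\<Sum>j\<in>S. A$i$j * N j k)^2)"
    by (rule sum.swap)
  finally show ?thesis .
qed

lemma sigma_le_op:
  fixes A :: "real^'r::finite^'r"
  assumes "S \<noteq> {}"
  shows "sigma_min_sub A S \<le> opnorm_sub A S S"
  unfolding sigma_min_sub_def opnorm_sub_def
proof (rule cInf_le_cSup)
  obtain s0 where s0: "s0 \<in> S" using assms by blast
  define x :: "real^'r" where "x = (\<chi> j. if j = s0 then 1 else 0)"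
  have "(\<Sum>j\<in>S. (x$j)^2) = 1"
    using s0 by (simp add: x_def if_distrib[of "\<lambda>t. t^2"] cong: if_cong)
  then show "{sqrt (\<Sum>i\<in>S. (\<Sum>j\<in>S. A $ i $ j * x $ j)\<^sup>2) |x. (\<Sum>j\<in>S. (x $ j)\<^sup>2) = 1} \<noteq> {}"
    by blast
  show "bdd_below {sqrt (\<Sum>i\<in>S. (\<Sum>j\<in>S. A $ i $ j * x $ j)\<^sup>2) |x. (\<Sum>j\<in>S. (x $ j)\<^sup>2) = 1}"
    by (rule bdd_belowI[where m=0]) (auto simp: sum_nonneg)
  show "bdd_above {sqrt (\<Sum>i\<in>S. (\<Sum>j\<in>S. A $ i $ j * x $ j)\<^sup>2) |x. (\<Sum>j\<in>S. (x $ j)\<^sup>2) = 1}"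
  proof (rule bdd_aboveI[where M="sqrt (\<Sum>i\<in>S. \<Sum>j\<in>S. (A$i$j)^2)"], clarify)
    fix x :: "real^'r" assume x1: "(\<Sum>j\<in>S. (x $ j)\<^sup>2) = 1"
    have "\<And>i. (\<Sum>j\<in>S. A $ i $ j * x $ j)\<^sup>2 \<le> (\<Sum>j\<in>S. (A$i$j)^2)"
      using Cauchy_Schwarz_ineq_sum[of "\<lambda>j. A$i$j" "\<lambda>j. x$j" S for i] x1 by simp
    then have "(\<Sum>i\<in>S. (\<Sum>j\<in>S. A $ i $ j * x $ j)\<^sup>2) \<le> (\<Sum>i\<in>S. \<Sum>j\<in>S. (A$i$j)^2)"
      by (rule sum_mono)
    then show "sqrt (\<Sum>i\<in>S. (\<Sum>j\<in>S. A $ i $ j * x $ j)\<^sup>2) \<le> sqrt (\<Sum>i\<in>S. \<Sum>j\<in>S. (A$i$j)^2)"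
      by simp
  qed
qed

lemma n2_bound:
  fixes A :: "real^'c::finite^'r::finite"
  assumes "i \<in> S1"
  shows "sqrt (\<Sum>j\<in>S2. (A$i$j)^2) \<le> norm_2inf_sub A S1 S2"
  unfolding norm_2inf_sub_def
  by (rule Max_ge) (use assms in auto)

lemma n2_nonneg: "0 \<le> norm_2inf_sub (A :: real^'c::finite^'r::finite) S1 S2"
  unfolding norm_2inf_sub_def
  by (rule Max_ge) auto

lemma n2_zero:
  fixes A :: "real^'c::finite^'r::finite"
  assumes "norm_2inf_sub A S1 S2 \<le> 0" "i \<in> S1" "j \<in> S2"
  shows "A$i$j = 0"
proof -
  have "sqrt (\<Sum>j\<in>S2. (A$i$j)^2) \<le> norm_2inf_sub A S1 S2" by (rule n2_bound[OF assms(2)])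
  then have "sqrt (\<Sum>j\<in>S2. (A$i$j)^2) \<le> 0" using assms(1) by linarith
  then have "(\<Sum>j\<in>S2. (A$i$j)^2) = 0" by (metis antisym real_sqrt_eq_zero_cancel_iff real_sqrt_ge_zero sum_nonneg zero_le_power2)
  then have "\<forall>j\<in>S2. (A$i$j)^2 = 0" by (subst (asm) sum_nonneg_eq_0_iff) auto
  then show ?thesis using assms(3) by simp
qed

lemma max_abs_ge: "\<bar>(G :: real^'c::finite^'r::finite)$i$j\<bar> \<le> max_abs G"
proof -
  have "{\<bar>G $ i $ j\<bar> | i j. True} = (\<lambda>(i,j). \<bar>G $ i $ j\<bar>) ` UNIV" by auto
  then have "finite {\<bar>G $ i $ j\<bar> | i j. True}" by simp
  then show ?thesis unfolding max_abs_def by (rule Max_ge) auto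
qed

lemma tau_ge:
  shows "norm_2inf_sub (cov X X) (-Su) Su * norm_2inf_sub (cov Y Y) (-Sv) Sv \<le> tau_hat X Y Su Sv"
    and "norm_2inf_sub (cov X X) (-Su) Su * opnorm_sub (cov Y Y) Sv Sv \<le> tau_hat X Y Su Sv"
    and "opnorm_sub (cov X X) Su Su * norm_2inf_sub (cov Y Y) (-Sv) Sv \<le> tau_hat X Y Su Sv"
  unfolding tau_hat_def by (auto intro: Max_ge)

lemma cov_entry:
  fixes X :: "real^'a::finite^'n::finite" and Y :: "real^'b::finite^'n"
  shows "cov X Y $ j $ k = (\<Sum>i\<in>UNIV. X$i$j * Y$i$k) / real CARD('n)"
  unfolding cov_def by (simp add: matrix_matrix_mult_def transpose_def)

lemma cov_sym: "cov X X $ j $ l = cov X X $ l $ j"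
  unfolding cov_entry by (simp add: mult.commute)

lemma sum4_swap:
  fixes f :: "'a \<Rightarrow> 'b \<Rightarrow> 'c \<Rightarrow> 'd \<Rightarrow> real"
  shows "(\<Sum>i\<in>I. \<Sum>i'\<in>I'. \<Sum>j\<in>J. \<Sum>k\<in>K. f i i' j k) = (\<Sum>j\<in>J. \<Sum>k\<in>K. \<Sum>i\<in>I. \<Sum>i'\<in>I'. f i i' j k)"
proof -
  have "(\<Sum>i\<in>I. \<Sum>i'\<in>I'. \<Sum>j\<in>J. \<Sum>k\<in>K. f i i' j k) = (\<Sum>i\<in>I. \<Sum>j\<in>J. \<Sum>i'\<in>I'. \<Sum>k\<in>K. f i i' j k)"
    by (rule sum.cong[OF refl], rule sum.swap)
  also have "\<dots> = (\<Sum>i\<in>I. \<Sum>j\<in>J. \<Sum>k\<in>K. \<Sum>i'\<in>I'. f i i' j k)"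
    by (rule sum.cong[OF refl], rule sum.cong[OF refl], rule sum.swap)
  also have "\<dots> = (\<Sum>j\<in>J. \<Sum>i\<in>I. \<Sum>k\<in>K. \<Sum>i'\<in>I'. f i i' j k)"
    by (rule sum.swap)
  also have "\<dots> = (\<Sum>j\<in>J. \<Sum>k\<in>K. \<Sum>i\<in>I. \<Sum>i'\<in>I'. f i i' j k)"
    by (rule sum.cong[OF refl], rule sum.swap)
  finally show ?thesis .
qed

definition PP :: "real^'p::finite^'n::finite \<Rightarrow> real^'q::finite^'n \<Rightarrow> real^'q^'p \<Rightarrow> 'n \<Rightarrow> 'n \<Rightarrow> real" where
  "PP X Y B i i' = (\<Sum>j\<in>UNIV. \<Sum>k\<in>UNIV. X$i$j * B$j$k * Y$i'$k) / real CARD('n)"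

definition KK :: "real^'p::finite^'p \<Rightarrow> real^'q::finite^'p \<Rightarrow> real^'q^'q \<Rightarrow> 'p \<Rightarrow> 'q \<Rightarrow> real" where
  "KK A B C j k = (\<Sum>l\<in>UNIV. \<Sum>m\<in>UNIV. A$j$l * B$l$m * C$m$k)"

lemma obj_formula:
  fixes X :: "real^'p::finite^'n::finite" and Y :: "real^'q::finite^'n"
  shows "cca_obj X Y \<rho> B = 1/2 * (\<Sum>i\<in>UNIV. \<Sum>i'\<in>UNIV. (PP X Y B i i' - (if i = i' then 1 else 0))^2) + \<rho> * l1_entries B"
proof -
  have "\<And>i i'. ((1 / real CARD('n)) *\<^sub>R (X ** B ** transpose Y) - mat 1) $ i $ i' = PP X Y B i i' - (if i = i' then 1 else 0)"
    by (simp add: PP_def matrix_matrix_mult_def transpose_def mat_def sum_distrib_right sum_divide_distrib[symmetric])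
       (subst sum.swap, simp)
  then show ?thesis unfolding cca_obj_def frob_sq_def by simp
qed

lemma PP_diff: "PP X Y (B - B0) i i' = PP X Y B i i' - PP X Y B0 i i'"
  by (simp add: PP_def algebra_simps sum_subtractf diff_divide_distrib)

lemma KK_diff: "KK A (B - B0) C j k = KK A B C j k - KK A B0 C j k"
  by (simp add: KK_def algebra_simps sum_subtractf)

lemma KK_mat: "(A ** B ** C) $ j $ k = KK A B C j k"
  by (simp add: KK_def matrix_matrix_mult_def sum_distrib_right) (subst sum.swap, simp)

lemma grad_identity:
  fixes X :: "real^'p::finite^'n::finite" and Y :: "real^'q::finite^'n"
  shows "(\<Sum>i\<in>UNIV. \<Sum>i'\<in>UNIV. X$i$j * Y$i'$k * PP X Y B i i') / real CARD('n) = KK (cov X X) B (cov Y Y) j k"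
proof -
  have "(\<Sum>i\<in>UNIV. \<Sum>i'\<in>UNIV. X$i$j * Y$i'$k * PP X Y B i i') / real CARD('n)
     = (\<Sum>i\<in>UNIV. \<Sum>i'\<in>UNIV. \<Sum>l\<in>UNIV. \<Sum>m\<in>UNIV. X$i$j * X$i$l * B$l$m * Y$i'$m * Y$i'$k / (real CARD('n) * real CARD('n)))"
    by (simp add: PP_def sum_divide_distrib sum_distrib_left mult_ac)
  also have "\<dots> = (\<Sum>l\<in>UNIV. \<Sum>m\<in>UNIV. \<Sum>i\<in>UNIV. \<Sum>i'\<in>UNIV. X$i$j * X$i$l * B$l$m * Y$i'$m * Y$i'$k / (real CARD('n) * real CARD('n)))"
    by (rule sum4_swap)
  also have "\<dots> = KK (cov X X) B (cov Y Y) j k"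
    by (simp add: KK_def cov_entry sum_divide_distrib sum_distrib_left sum_distrib_right mult_ac)
  finally show ?thesis .
qed

lemma M_identity:
  fixes X :: "real^'p::finite^'n::finite" and Y :: "real^'q::finite^'n"
  shows "(\<Sum>i\<in>UNIV. \<Sum>i'\<in>UNIV. X$i$j * Y$i'$k * (if i = i' then 1 else 0)) / real CARD('n) = cov X Y $ j $ k"
  by (simp add: cov_entry if_distrib[of "\<lambda>t. _ * t"] cong: if_cong)

lemma swap_lemma:
  fixes X :: "real^'p::finite^'n::finite" and Y :: "real^'q::finite^'n"
  shows "(\<Sum>i\<in>UNIV. \<Sum>i'\<in>UNIV. H i i' * PP X Y D i i')
     = (\<Sum>j\<in>UNIV. \<Sum>k\<in>UNIV. D$j$k * ((\<Sum>i\<in>UNIV. \<Sum>i'\<in>UNIV. X$i$j * Y$i'$k * H i i') / real CARD('n)))"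
proof -
  have "(\<Sum>i\<in>UNIV. \<Sum>i'\<in>UNIV. H i i' * PP X Y D i i')
     = (\<Sum>i\<in>UNIV. \<Sum>i'\<in>UNIV. \<Sum>j\<in>UNIV. \<Sum>k\<in>UNIV. D$j$k * (X$i$j * Y$i'$k * H i i' / real CARD('n)))"
    by (simp add: PP_def sum_divide_distrib sum_distrib_left mult_ac)
  also have "\<dots> = (\<Sum>j\<in>UNIV. \<Sum>k\<in>UNIV. \<Sum>i\<in>UNIV. \<Sum>i'\<in>UNIV. D$j$k * (X$i$j * Y$i'$k * H i i' / real CARD('n)))"
    by (rule sum4_swap)
  also have "\<dots> = (\<Sum>j\<in>UNIV. \<Sum>k\<in>UNIV. D$j$k * ((\<Sum>i\<in>UNIV. \<Sum>i'\<in>UNIV. X$i$j * Y$i'$k * H i i') / real CARD('n)))"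
    by (simp add: sum_divide_distrib sum_distrib_left)
  finally show ?thesis .
qed

lemma expansion:
  fixes X :: "real^'p::finite^'n::finite" and Y :: "real^'q::finite^'n"
  shows "cca_obj X Y \<rho> B = cca_obj X Y \<rho> B0
     + (\<Sum>j\<in>UNIV. \<Sum>k\<in>UNIV. (B - B0)$j$k * ((\<Sum>i\<in>UNIV. \<Sum>i'\<in>UNIV. X$i$j * Y$i'$k * (PP X Y B0 i i' - (if i = i' then 1 else 0))) / real CARD('n)))
     + 1/2 * (\<Sum>i\<in>UNIV. \<Sum>i'\<in>UNIV. (PP X Y (B - B0) i i')^2)
     + \<rho> * (l1_entries B - l1_entries B0)"
proof -
  define e where "e = (\<lambda>i i'. PP X Y B0 i i' - (if i = i' then 1 else (0::real)))"
  define d where "d = (\<lambda>i i'. PP X Y (B - B0) i i')"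
  have "\<And>i i'. PP X Y B i i' - (if i = i' then 1 else 0) = e i i' + d i i'"
    unfolding e_def d_def PP_diff by simp
  then have "(\<Sum>i\<in>UNIV. \<Sum>i'\<in>UNIV. (PP X Y B i i' - (if i = i' then 1 else 0))^2)
     = (\<Sum>i\<in>UNIV. \<Sum>i'\<in>UNIV. (e i i')^2 + 2 * (e i i' * d i i') + (d i i')^2)"
    by (intro sum.cong refl) (simp add: power2_sum algebra_simps)
  also have "\<dots> = (\<Sum>i\<in>UNIV. \<Sum>i'\<in>UNIV. (e i i')^2) + 2 * (\<Sum>i\<in>UNIV. \<Sum>i'\<in>UNIV. e i i' * d i i') + (\<Sum>i\<in>UNIV. \<Sum>i'\<in>UNIV. (d i i')^2)"
    by (simp add: sum.distrib sum_distrib_left)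
  finally have *: "(\<Sum>i\<in>UNIV. \<Sum>i'\<in>UNIV. (PP X Y B i i' - (if i = i' then 1 else 0))^2) = \<dots>" .
  have sw: "(\<Sum>i\<in>UNIV. \<Sum>i'\<in>UNIV. e i i' * d i i') = (\<Sum>j\<in>UNIV. \<Sum>k\<in>UNIV. (B - B0)$j$k * ((\<Sum>i\<in>UNIV. \<Sum>i'\<in>UNIV. X$i$j * Y$i'$k * e i i') / real CARD('n)))"
    unfolding d_def by (rule swap_lemma)
  show ?thesis
    unfolding obj_formula[of X Y \<rho> B] obj_formula[of X Y \<rho> B0] * sw
    by (simp add: e_def d_def algebra_simps)
qed

lemma norm_le_l1: "norm (B :: real^'q::finite^'p::finite) \<le> l1_entries B"
proof -
  have "norm B \<le> (\<Sum>j\<in>UNIV. norm (B$j))"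
    unfolding norm_vec_def by (rule L2_set_le_sum) simp
  also have "\<dots> \<le> l1_entries B"
    unfolding l1_entries_def by (rule sum_mono) (rule norm_le_l1_cart)
  finally show ?thesis .
qed

lemma obj_ge_l1:
  fixes X :: "real^'p::finite^'n::finite" and Y :: "real^'q::finite^'n"
  assumes "\<rho> > 0"
  shows "\<rho> * l1_entries B \<le> cca_obj X Y \<rho> B"
  unfolding obj_formula by (simp add: sum_nonneg)

lemma l1_nonneg: "0 \<le> l1_entries B"
  unfolding l1_entries_def by (simp add: sum_nonneg)

lemma exists_min_V:
  fixes X :: "real^'p::finite^'n::finite" and Y :: "real^'q::finite^'n"
  assumes rho: "\<rho> > 0"
  shows "\<exists>B0. (\<forall>j k. B0$j$k \<noteq> 0 \<longrightarrow> j\<in>Su \<and> k\<in>Sv) \<and>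
     (\<forall>B. (\<forall>j k. B$j$k \<noteq> 0 \<longrightarrow> j\<in>Su \<and> k\<in>Sv) \<longrightarrow> cca_obj X Y \<rho> B0 \<le> cca_obj X Y \<rho> B)"
proof -
  define f0 where "f0 = cca_obj X Y \<rho> 0"
  define V where "V = {B :: real^'q^'p. \<forall>j k. B$j$k * (if j \<in> Su \<and> k \<in> Sv then 0 else 1) = 0}"
  have V_iff: "B \<in> V \<longleftrightarrow> (\<forall>j k. B$j$k \<noteq> 0 \<longrightarrow> j\<in>Su \<and> k\<in>Sv)" for B
    unfolding V_def by auto
  define K where "K = V \<inter> {B. l1_entries B \<le> f0 / \<rho>}"
  have contl1: "continuous_on UNIV (\<lambda>B :: real^'q^'p. l1_entries B)"
    unfolding l1_entries_def by (intro continuous_intros)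
  have closedV: "closed V"
    unfolding V_def
    by (intro closed_Collect_all closed_Collect_eq continuous_intros)
  have "closed K"
    unfolding K_def
    by (intro closed_Int closedV closed_Collect_le contl1 continuous_intros)
  moreover have "bounded K"
    unfolding bounded_iff K_def using norm_le_l1 by (meson Int_iff mem_Collect_eq order_trans)
  ultimately have "compact K" by (simp add: compact_eq_bounded_closed)
  moreover have "0 \<in> K"
  proof -
    have "\<rho> * l1_entries (0::real^'q^'p) \<le> f0" unfolding f0_def by (rule obj_ge_l1[OF rho])
    then have "0 \<le> f0" by (simp add: l1_entries_def)
    then show ?thesis unfolding K_def V_def using rho by (simp add: l1_entries_def)
  qed
  moreover have "continuous_on K (cca_obj X Y \<rho>)"
  proof -
    have "continuous_on UNIV (\<lambda>B. 1/2 * (\<Sum>i\<in>UNIV. \<Sum>i'\<in>UNIV. (PP X Y B i i' - (if i = i' then 1 else 0))^2) + \<rho> * l1_entries B)"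
      unfolding PP_def l1_entries_def by (intro continuous_intros) auto
    then show ?thesis unfolding obj_formula[abs_def] by (rule continuous_on_subset) simp
  qed
  ultimately obtain B0 where B0: "B0 \<in> K" "\<forall>B\<in>K. cca_obj X Y \<rho> B0 \<le> cca_obj X Y \<rho> B"
    using continuous_attains_inf by blast
  have "cca_obj X Y \<rho> B0 \<le> cca_obj X Y \<rho> B" if "B \<in> V" for B
  proof (cases "B \<in> K")
    case True then show ?thesis using B0 by blast
  next
    case False
    then have "l1_entries B > f0 / \<rho>" using that unfolding K_def by auto
    then have "f0 < \<rho> * l1_entries B" using rho by (simp add: pos_divide_less_eq mult.commute)
    also have "\<dots> \<le> cca_obj X Y \<rho> B" by (rule obj_ge_l1[OF rho])
    finally have "f0 < cca_obj X Y \<rho> B" .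
    moreover have "cca_obj X Y \<rho> B0 \<le> f0" using B0 \<open>0 \<in> K\<close> unfolding f0_def by blast
    ultimately show ?thesis by linarith
  qed
  moreover have "B0 \<in> V" using B0(1) unfolding K_def by blast
  ultimately show ?thesis unfolding V_iff by blast
qed

lemma eps_le:
  fixes b c D r :: real
  assumes "b > 0" "c \<ge> 0" "\<And>e. 0 < e \<Longrightarrow> e < b \<Longrightarrow> D \<le> r + c * e"
  shows "D \<le> r"
proof (rule ccontr)
  assume "\<not> D \<le> r"
  then have dr: "D - r > 0" by simp
  define e where "e = min (b/2) ((D - r) / (2 * (c + 1)))"
  have e0: "e > 0" using assms dr unfolding e_def by auto
  have eb: "e < b" using assms unfolding e_def by auto
  have "e \<le> (D - r) / (2 * (c + 1))" unfolding e_def by simp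
  then have "(c + 1) * e \<le> (D - r) / 2" using assms(2) by (simp add: field_simps)
  moreover have "c * e \<le> (c + 1) * e" using e0 by (simp add: field_simps)
  ultimately have "c * e \<le> (D - r) / 2" by (rule order_trans[rotated])
  moreover have "(D - r) / 2 < D - r" using dr by simp
  ultimately have "c * e < D - r" by (rule le_less_trans)
  with assms(3)[OF e0 eb] show False by linarith
qed

lemma div_step:
  fixes e D r c :: real
  assumes "e > 0" "0 \<le> e * (r + c * e - D)"
  shows "D \<le> r + c * e"
  using assms by (simp add: zero_le_mult_iff)

lemma coord_kkt:
  fixes D c b \<rho> :: real
  assumes rho: "\<rho> > 0" and c: "c \<ge> 0" and opt: "\<And>t. 0 \<le> t * D + c * t^2 + \<rho> * (\<bar>b + t\<bar> - \<bar>b\<bar>)"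
  shows "\<bar>D\<bar> \<le> \<rho>" and "b > 0 \<Longrightarrow> D = -\<rho>" and "b < 0 \<Longrightarrow> D = \<rho>"
proof -
  have up: "D \<le> \<rho>"
  proof (rule eps_le[of 1 c])
    fix e :: real assume e: "0 < e" "e < 1"
    have "0 \<le> (-e) * D + c * (-e)^2 + \<rho> * (\<bar>b + -e\<bar> - \<bar>b\<bar>)" by (rule opt)
    moreover have "\<rho> * (\<bar>b + -e\<bar> - \<bar>b\<bar>) \<le> \<rho> * e" using rho e by (intro mult_left_mono) auto
    ultimately have "0 \<le> e * (\<rho> + c * e - D)" by (simp add: algebra_simps power2_eq_square)
    then show "D \<le> \<rho> + c * e" by (rule div_step[OF e(1)])
  qed (use c in auto)
  have lo: "-D \<le> \<rho>"
  proof (rule eps_le[of 1 c])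
    fix e :: real assume e: "0 < e" "e < 1"
    have "0 \<le> e * D + c * e^2 + \<rho> * (\<bar>b + e\<bar> - \<bar>b\<bar>)" by (rule opt)
    moreover have "\<rho> * (\<bar>b + e\<bar> - \<bar>b\<bar>) \<le> \<rho> * e" using rho e by (intro mult_left_mono) auto
    ultimately have "0 \<le> e * (\<rho> + c * e - (-D))" by (simp add: algebra_simps power2_eq_square)
    then show "-D \<le> \<rho> + c * e" by (rule div_step[OF e(1)])
  qed (use c in auto)
  show "\<bar>D\<bar> \<le> \<rho>" using up lo by linarith
  show "D = -\<rho>" if b: "b > 0"
  proof -
    have "D \<le> -\<rho>"
    proof (rule eps_le[of b c])
      fix e :: real assume e: "0 < e" "e < b"
      have eq: "\<bar>b + -e\<bar> - \<bar>b\<bar> = -e" using b e by auto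
      have "0 \<le> (-e) * D + c * (-e)^2 + \<rho> * (-e)" using opt[of "-e"] unfolding eq .
      then have "0 \<le> e * (-\<rho> + c * e - D)" by (simp add: algebra_simps power2_eq_square)
      then show "D \<le> -\<rho> + c * e" by (rule div_step[OF e(1)])
    qed (use c b in auto)
    then show ?thesis using lo by linarith
  qed
  show "D = \<rho>" if b: "b < 0"
  proof -
    have "-D \<le> -\<rho>"
    proof (rule eps_le[of "-b" c])
      fix e :: real assume e: "0 < e" "e < -b"
      have eq: "\<bar>b + e\<bar> - \<bar>b\<bar> = -e" using b e by auto
      have "0 \<le> e * D + c * e^2 + \<rho> * (-e)" using opt[of "e"] unfolding eq .
      then have "0 \<le> e * (-\<rho> + c * e - (-D))" by (simp add: algebra_simps power2_eq_square)
      then show "-D \<le> -\<rho> + c * e" by (rule div_step[OF e(1)])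
    qed (use c b in auto)
    then show ?thesis using up by linarith
  qed
qed

lemma KK_supp:
  assumes "\<And>l m. \<not> (l \<in> Su \<and> m \<in> Sv) \<Longrightarrow> A$j$l * D$l$m * C$m$k = 0"
  shows "KK A D C j k = (\<Sum>l\<in>Su. \<Sum>m\<in>Sv. A$j$l * D$l$m * C$m$k)"
proof -
  have "KK A D C j k = (\<Sum>l\<in>Su. \<Sum>m\<in>UNIV. A$j$l * D$l$m * C$m$k)"
    unfolding KK_def by (rule sum.mono_neutral_right) (use assms in \<open>auto intro!: sum.neutral\<close>)
  also have "\<dots> = (\<Sum>l\<in>Su. \<Sum>m\<in>Sv. A$j$l * D$l$m * C$m$k)"
    by (intro sum.cong refl sum.mono_neutral_right) (use assms in auto)
  finally show ?thesis .
qed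

lemma CS_abs:
  fixes f g :: "'a \<Rightarrow> real"
  shows "\<bar>\<Sum>i\<in>I. f i * g i\<bar> \<le> sqrt (\<Sum>i\<in>I. (f i)^2) * sqrt (\<Sum>i\<in>I. (g i)^2)"
proof -
  have "\<bar>\<Sum>i\<in>I. f i * g i\<bar> = sqrt ((\<Sum>i\<in>I. f i * g i)^2)" by simp
  also have "\<dots> \<le> sqrt ((\<Sum>i\<in>I. (f i)^2) * (\<Sum>i\<in>I. (g i)^2))"
    by (rule real_sqrt_le_mono, rule Cauchy_Schwarz_ineq_sum)
  also have "\<dots> = sqrt (\<Sum>i\<in>I. (f i)^2) * sqrt (\<Sum>i\<in>I. (g i)^2)" by (rule real_sqrt_mult)
  finally show ?thesis .
qed

lemma frob_chain:
  fixes A :: "real^'p::finite^'p" and C :: "real^'q::finite^'q" and D :: "'p \<Rightarrow> 'q \<Rightarrow> real"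
  assumes sA: "sigma_min_sub A Su \<ge> 0" and sC: "sigma_min_sub C Sv \<ge> 0"
    and Csym: "\<And>m k. C$m$k = C$k$m"
  defines "U \<equiv> \<lambda>l k. \<Sum>m\<in>Sv. D l m * C$m$k"
    and "V \<equiv> \<lambda>j m. \<Sum>l\<in>Su. A$j$l * D l m"
    and "RK \<equiv> \<lambda>j k. \<Sum>l\<in>Su. \<Sum>m\<in>Sv. A$j$l * D l m * C$m$k"
  shows "RK j k = (\<Sum>l\<in>Su. A$j$l * U l k)"
    and "RK j k = (\<Sum>m\<in>Sv. V j m * C$m$k)"
    and "(sigma_min_sub A Su)^2 * (\<Sum>l\<in>Su. \<Sum>k\<in>Sv. (U l k)^2) \<le> (\<Sum>j\<in>Su. \<Sum>k\<in>Sv. (RK j k)^2)"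
    and "(sigma_min_sub C Sv)^2 * (\<Sum>j\<in>Su. \<Sum>m\<in>Sv. (V j m)^2) \<le> (\<Sum>j\<in>Su. \<Sum>k\<in>Sv. (RK j k)^2)"
    and "(sigma_min_sub C Sv)^2 * (\<Sum>l\<in>Su. \<Sum>m\<in>Sv. (D l m)^2) \<le> (\<Sum>l\<in>Su. \<Sum>k\<in>Sv. (U l k)^2)"
proof -
  show RK1: "RK j k = (\<Sum>l\<in>Su. A$j$l * U l k)" for j k
    unfolding RK_def U_def by (simp add: sum_distrib_left mult_ac)
  show RK2: "RK j k = (\<Sum>m\<in>Sv. V j m * C$m$k)" for j k
    unfolding RK_def V_def sum_distrib_right by (rule sum.swap)
  show "(sigma_min_sub A Su)^2 * (\<Sum>l\<in>Su. \<Sum>k\<in>Sv. (U l k)^2) \<le> (\<Sum>j\<in>Su. \<Sum>k\<in>Sv. (RK j k)^2)"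
    unfolding RK1 by (rule sigma_bound_mat[OF sA])
  have "(sigma_min_sub C Sv)^2 * (\<Sum>m\<in>Sv. \<Sum>j\<in>Su. (V j m)^2) \<le> (\<Sum>k\<in>Sv. \<Sum>j\<in>Su. (\<Sum>m\<in>Sv. C$k$m * V j m)^2)"
    by (rule sigma_bound_mat[OF sC])
  also have "\<dots> = (\<Sum>j\<in>Su. \<Sum>k\<in>Sv. (RK j k)^2)"
    unfolding RK2 by (subst sum.swap) (simp add: Csym mult.commute)
  finally show "(sigma_min_sub C Sv)^2 * (\<Sum>j\<in>Su. \<Sum>m\<in>Sv. (V j m)^2) \<le> (\<Sum>j\<in>Su. \<Sum>k\<in>Sv. (RK j k)^2)"
    by (subst sum.swap) 
  have "(sigma_min_sub C Sv)^2 * (\<Sum>m\<in>Sv. \<Sum>l\<in>Su. (D l m)^2) \<le> (\<Sum>k\<in>Sv. \<Sum>l\<in>Su. (\<Sum>m\<in>Sv. C$k$m * D l m)^2)"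
    by (rule sigma_bound_mat[OF sC])
  also have "\<dots> = (\<Sum>l\<in>Su. \<Sum>k\<in>Sv. (U l k)^2)"
    unfolding U_def by (subst sum.swap) (simp add: Csym mult.commute)
  finally show "(sigma_min_sub C Sv)^2 * (\<Sum>l\<in>Su. \<Sum>m\<in>Sv. (D l m)^2) \<le> (\<Sum>l\<in>Su. \<Sum>k\<in>Sv. (U l k)^2)"
    by (subst sum.swap)
qed




lemma sum_delta2: "(\<Sum>a\<in>(UNIV::'p::finite set). \<Sum>b\<in>(UNIV::'q::finite set). if a = j then if b = k then (x::real) else 0 else 0) = x"
proof -
  have "(\<Sum>b\<in>(UNIV::'q set). if a = j then if b = k then x else 0 else 0) = (if a = j then x else 0)" for a
    by (cases "a = j") simp_all
  then show ?thesis by simp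
qed

lemma sqrt_div_bound:
  fixes s x W :: real
  assumes "s > 0" "s^2 * x \<le> W" "x \<ge> 0"
  shows "sqrt x \<le> sqrt W / s"
proof -
  have "s * sqrt x = sqrt (s^2 * x)" using assms(1) by (simp add: real_sqrt_mult)
  also have "\<dots> \<le> sqrt W" using assms(2) by simp
  finally show ?thesis using assms(1) by (simp add: field_simps)
qed

lemma sum_sq_bound:
  fixes F :: "'a \<Rightarrow> 'b \<Rightarrow> real"
  assumes "\<And>j k. j \<in> S \<Longrightarrow> k \<in> T \<Longrightarrow> (F j k)^2 \<le> c"
  shows "(\<Sum>j\<in>S. \<Sum>k\<in>T. (F j k)^2) \<le> real (card S) * real (card T) * c"
proof -
  have "(\<Sum>j\<in>S. \<Sum>k\<in>T. (F j k)^2) \<le> (\<Sum>j\<in>S. real (card T) * c)"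
    by (rule sum_mono, rule order_trans[OF sum_bounded_above[of T "\<lambda>k. (F _ k)^2" c]]) (use assms in auto)
  also have "\<dots> = real (card S) * real (card T) * c" by simp
  finally show ?thesis .
qed

lemma pos_mult_le0:
  fixes s x :: real
  assumes "s > 0" "s^2 * x \<le> 0"
  shows "x \<le> 0"
proof -
  have "s^2 > 0" using assms(1) by simp
  then show ?thesis using assms(2) by (simp add: mult_le_0_iff)
qed

lemma sum2_zero:
  fixes F :: "'a \<Rightarrow> 'b \<Rightarrow> real"
  assumes "finite S" "finite T" "(\<Sum>j\<in>S. \<Sum>k\<in>T. F j k) \<le> 0" "\<And>j k. j \<in> S \<Longrightarrow> k \<in> T \<Longrightarrow> F j k \<ge> 0"
    and "j \<in> S" "k \<in> T"
  shows "F j k = 0"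
proof -
  have nn: "0 \<le> (\<Sum>k\<in>T. F j' k)" if "j' \<in> S" for j'
    by (rule sum_nonneg) (rule assms(4)[OF that])
  have "0 \<le> (\<Sum>j\<in>S. \<Sum>k\<in>T. F j k)" by (rule sum_nonneg) (rule nn)
  then have "(\<Sum>j\<in>S. \<Sum>k\<in>T. F j k) = 0" using assms(3) by linarith
  then have "\<forall>j\<in>S. (\<Sum>k\<in>T. F j k) = 0" by (subst (asm) sum_nonneg_eq_0_iff[OF assms(1)]) (use nn in auto)
  then have "(\<Sum>k\<in>T. F j k) = 0" using assms(5) by blast
  then have "\<forall>k\<in>T. F j k = 0" by (subst (asm) sum_nonneg_eq_0_iff[OF assms(2)]) (use assms(4,5) in auto)
  then show ?thesis using assms(6) by blast
qed

lemma frob_zero: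
  fixes A :: "real^'p::finite^'p" and C :: "real^'q::finite^'q" and D :: "'p \<Rightarrow> 'q \<Rightarrow> real"
  assumes sA: "sigma_min_sub A Su > 0" and sC: "sigma_min_sub C Sv > 0" and Csym: "\<And>m k. C$m$k = C$k$m"
    and z: "\<And>j k. j \<in> Su \<Longrightarrow> k \<in> Sv \<Longrightarrow> (\<Sum>l\<in>Su. \<Sum>m\<in>Sv. A$j$l * D l m * C$m$k) = 0"
    and lm: "l \<in> Su" "m \<in> Sv"
  shows "D l m = 0"
proof -
  note fc = frob_chain[OF less_imp_le[OF sA] less_imp_le[OF sC] Csym, where D=D]
  have "(\<Sum>j\<in>Su. \<Sum>k\<in>Sv. (\<Sum>l\<in>Su. \<Sum>m\<in>Sv. A$j$l * D l m * C$m$k)^2) = 0" using z by simp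
  then have "(sigma_min_sub A Su)^2 * (\<Sum>l\<in>Su. \<Sum>k\<in>Sv. (\<Sum>m\<in>Sv. D l m * C $ m $ k)\<^sup>2) \<le> 0"
    using fc(3) by simp
  then have u: "(\<Sum>l\<in>Su. \<Sum>k\<in>Sv. (\<Sum>m\<in>Sv. D l m * C $ m $ k)\<^sup>2) \<le> 0" using sA by (rule pos_mult_le0[rotated])
  have "(sigma_min_sub C Sv)^2 * (\<Sum>l\<in>Su. \<Sum>m\<in>Sv. (D l m)^2) \<le> 0" using fc(5) u by linarith
  then have "(\<Sum>l\<in>Su. \<Sum>m\<in>Sv. (D l m)^2) \<le> 0" using sC by (rule pos_mult_le0[rotated])
  then have "(D l m)^2 = 0" using sum2_zero[of Su Sv "\<lambda>l m. (D l m)^2"] lm by simp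
  then show ?thesis by simp
qed

theorem theorem5:
  fixes X :: "real^'p::finite^'n::finite"
    and Y :: "real^'q::finite^'n"
    and Bstar :: "real^'q^'p"
    and Su :: "'p set" and Sv :: "'q set"
    and \<rho> :: real
  assumes rho_pos: "\<rho> > 0"
    and Su_ne: "Su \<noteq> {}" and Sv_ne: "Sv \<noteq> {}"
    and supp: "\<forall>i j. Bstar $ i $ j \<noteq> 0 \<longrightarrow> i \<in> Su \<and> j \<in> Sv"
    and n_gt: "CARD('n) > max (card Su) (card Sv)"
    and sX: "sigma_min_sub (cov X X) Su > 0"
    and sY: "sigma_min_sub (cov Y Y) Sv > 0"
    and cond: "let G = cov X Y - cov X X ** Bstar ** cov Y Y in
       max_abs G / \<rho> + 2 * (max_abs G + \<rho>) / \<rho> *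
         (tau_hat X Y Su Sv * sqrt (real (card Su) * real (card Sv))
          / (sigma_min_sub (cov X X) Su * sigma_min_sub (cov Y Y) Sv)) \<le> 1"
  shows "(\<exists>!B. \<forall>B'. cca_obj X Y \<rho> B \<le> cca_obj X Y \<rho> B') \<and>
         (\<forall>B. (\<forall>B'. cca_obj X Y \<rho> B \<le> cca_obj X Y \<rho> B') \<longrightarrow>
              (\<forall>i j. B $ i $ j \<noteq> 0 \<longrightarrow> i \<in> Su \<and> j \<in> Sv))"
proof -
  define A where "A = cov X X"
  define C where "C = cov Y Y"
  define M where "M = cov X Y"
  define G where "G = M - A ** Bstar ** C"
  define g where "g = max_abs G"
  define \<tau> where "\<tau> = tau_hat X Y Su Sv"
  define sA where "sA = sigma_min_sub A Su"
  define sC where "sC = sigma_min_sub C Sv"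
  define su where "su = real (card Su)"
  define sv where "sv = real (card Sv)"
  define n2A where "n2A = norm_2inf_sub A (-Su) Su"
  define n2C where "n2C = norm_2inf_sub C (-Sv) Sv"
  define opA where "opA = opnorm_sub A Su Su"
  define opC where "opC = opnorm_sub C Sv Sv"
  define R where "R = \<tau> * sqrt (su * sv) * (g + \<rho>) / (sA * sC)"
  define f where "f = cca_obj X Y \<rho>"
  have sA0: "sA > 0" using sX unfolding sA_def A_def .
  have sC0: "sC > 0" using sY unfolding sC_def C_def .
  have cond': "g / \<rho> + 2 * (g + \<rho>) / \<rho> * (\<tau> * sqrt (su * sv) / (sA * sC)) \<le> 1"
    using cond unfolding Let_def g_def G_def M_def A_def C_def \<tau>_def su_def sv_def sA_def sC_def .
  have Gb: "\<bar>G$j$k\<bar> \<le> g" for j k unfolding g_def by (rule max_abs_ge)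
  have g0: "g \<ge> 0" using Gb[of undefined undefined] by linarith
  have Asym: "A$j$l = A$l$j" for j l unfolding A_def by (rule cov_sym)
  have Csym: "C$j$l = C$l$j" for j l unfolding C_def by (rule cov_sym)
  have n2A0: "n2A \<ge> 0" unfolding n2A_def by (rule n2_nonneg)
  have n2C0: "n2C \<ge> 0" unfolding n2C_def by (rule n2_nonneg)
  have tau1: "n2A * n2C \<le> \<tau>" and tau2: "n2A * opC \<le> \<tau>" and tau3: "opA * n2C \<le> \<tau>"
    unfolding n2A_def n2C_def opA_def opC_def \<tau>_def A_def C_def by (rule tau_ge)+
  have opA: "sA \<le> opA" unfolding sA_def opA_def by (rule sigma_le_op[OF Su_ne])
  have opC: "sC \<le> opC" unfolding sC_def opC_def by (rule sigma_le_op[OF Sv_ne])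
  have "0 \<le> n2A * n2C" using n2A0 n2C0 by (rule mult_nonneg_nonneg)
  then have tau0: "\<tau> \<ge> 0" using tau1 by linarith
  have su1: "su \<ge> 1" unfolding su_def using Su_ne by (simp add: Suc_leI card_gt_0_iff)
  have sv1: "sv \<ge> 1" unfolding sv_def using Sv_ne by (simp add: Suc_leI card_gt_0_iff)
  have R0: "R \<ge> 0" unfolding R_def using tau0 g0 rho_pos sA0 sC0 su1 sv1
    by (intro divide_nonneg_pos mult_nonneg_nonneg) auto
  have keyineq: "g + 2 * R \<le> \<rho>"
  proof -
    have "\<rho> * (g / \<rho> + 2 * (g + \<rho>) / \<rho> * (\<tau> * sqrt (su * sv) / (sA * sC))) = g + 2 * R"
      unfolding R_def using rho_pos sA0 sC0 by (simp add: field_simps)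
    moreover have "\<rho> * (g / \<rho> + 2 * (g + \<rho>) / \<rho> * (\<tau> * sqrt (su * sv) / (sA * sC))) \<le> \<rho> * 1"
      using cond' rho_pos by (intro mult_left_mono) auto
    ultimately show ?thesis by simp
  qed
  obtain B0 where supp0: "\<forall>j k. B0$j$k \<noteq> 0 \<longrightarrow> j\<in>Su \<and> k\<in>Sv"
    and minV: "\<forall>B. (\<forall>j k. B$j$k \<noteq> 0 \<longrightarrow> j\<in>Su \<and> k\<in>Sv) \<longrightarrow> f B0 \<le> f B"
    using exists_min_V[OF rho_pos, of Su Sv X Y] unfolding f_def by blast
  define Dg where "Dg j k = (\<Sum>i\<in>UNIV. \<Sum>i'\<in>UNIV. X$i$j * Y$i'$k * (PP X Y B0 i i' - (if i = i' then 1 else 0))) / real CARD('n)" for j k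
  have Dg_eq: "Dg j k = KK A B0 C j k - M$j$k" for j k
    unfolding Dg_def right_diff_distrib sum_subtractf diff_divide_distrib grad_identity M_identity A_def C_def M_def ..
  have expn: "f B = f B0 + (\<Sum>j\<in>UNIV. \<Sum>k\<in>UNIV. (B - B0)$j$k * Dg j k) + 1/2 * (\<Sum>i\<in>UNIV. \<Sum>i'\<in>UNIV. (PP X Y (B - B0) i i')^2) + \<rho> * (l1_entries B - l1_entries B0)" for B
    unfolding Dg_def f_def by (rule expansion)
  have kkt: "\<bar>Dg j k\<bar> \<le> \<rho> \<and> (B0$j$k > 0 \<longrightarrow> Dg j k = -\<rho>) \<and> (B0$j$k < 0 \<longrightarrow> Dg j k = \<rho>)"
    if jk: "j \<in> Su" "k \<in> Sv" for j k
  proof -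
    define E :: "real^'q^'p" where "E = (\<chi> a b. if a = j then if b = k then 1 else 0 else 0)"
    define c where "c = 1/2 * (\<Sum>i\<in>UNIV. \<Sum>i'\<in>UNIV. (PP X Y E i i')^2)"
    have c0: "c \<ge> 0" unfolding c_def by (simp add: sum_nonneg)
    have opt: "0 \<le> t * Dg j k + c * t^2 + \<rho> * (\<bar>B0$j$k + t\<bar> - \<bar>B0$j$k\<bar>)" for t
    proof -
      have inV: "\<forall>a b. (B0 + t *\<^sub>R E)$a$b \<noteq> 0 \<longrightarrow> a\<in>Su \<and> b\<in>Sv"
        using supp0 jk by (auto simp: E_def)
      have le: "f B0 \<le> f (B0 + t *\<^sub>R E)" using minV inV by blast
      have d: "B0 + t *\<^sub>R E - B0 = t *\<^sub>R E" by simp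
      have lin: "(\<Sum>a\<in>UNIV. \<Sum>b\<in>UNIV. (t *\<^sub>R E)$a$b * Dg a b) = t * Dg j k"
      proof -
        have "(\<Sum>a\<in>UNIV. \<Sum>b\<in>UNIV. (t *\<^sub>R E)$a$b * Dg a b) = (\<Sum>a\<in>UNIV. \<Sum>b\<in>UNIV. if a = j then if b = k then t * Dg j k else 0 else 0)"
          by (intro sum.cong refl) (simp add: E_def)
        also have "\<dots> = t * Dg j k" by (rule sum_delta2)
        finally show ?thesis .
      qed
      have "PP X Y (t *\<^sub>R E) i i' = t * PP X Y E i i'" for i i'
        unfolding PP_def by (simp add: sum_distrib_left mult_ac)
      then have quad: "1/2 * (\<Sum>i\<in>UNIV. \<Sum>i'\<in>UNIV. (PP X Y (t *\<^sub>R E) i i')^2) = c * t^2"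
        unfolding c_def by (simp add: power_mult_distrib sum_distrib_left sum_distrib_right mult_ac)
      have l1: "l1_entries (B0 + t *\<^sub>R E) - l1_entries B0 = \<bar>B0$j$k + t\<bar> - \<bar>B0$j$k\<bar>"
      proof -
        have "l1_entries (B0 + t *\<^sub>R E) - l1_entries B0 = (\<Sum>a\<in>UNIV. \<Sum>b\<in>UNIV. \<bar>(B0 + t *\<^sub>R E)$a$b\<bar> - \<bar>B0$a$b\<bar>)"
          unfolding l1_entries_def by (simp add: sum_subtractf)
        also have "\<dots> = (\<Sum>a\<in>UNIV. \<Sum>b\<in>UNIV. if a = j then if b = k then \<bar>B0$j$k + t\<bar> - \<bar>B0$j$k\<bar> else 0 else 0)"
          by (intro sum.cong refl) (simp add: E_def)
        also have "\<dots> = \<bar>B0$j$k + t\<bar> - \<bar>B0$j$k\<bar>" by (rule sum_delta2)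
        finally show ?thesis .
      qed
      show ?thesis using le expn[of "B0 + t *\<^sub>R E"] unfolding d lin quad l1 by simp
    qed
    show ?thesis using coord_kkt[OF rho_pos c0 opt] by blast
  qed
  define Z where "Z j k = - Dg j k / \<rho>" for j k
  have Dg_Z: "Dg j k = - \<rho> * Z j k" for j k unfolding Z_def using rho_pos by simp
  have ZS: "\<bar>Z j k\<bar> \<le> 1 \<and> Z j k * B0$j$k = \<bar>B0$j$k\<bar>" if "j \<in> Su" "k \<in> Sv" for j k
  proof -
    have h: "\<bar>Dg j k\<bar> \<le> \<rho>" "B0$j$k > 0 \<Longrightarrow> Dg j k = -\<rho>" "B0$j$k < 0 \<Longrightarrow> Dg j k = \<rho>"
      using kkt[OF that] by auto
    have "\<bar>Z j k\<bar> = \<bar>Dg j k\<bar> / \<rho>" unfolding Z_def using rho_pos by simp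
    also have "\<dots> \<le> 1" using h(1) rho_pos by simp
    finally have "\<bar>Z j k\<bar> \<le> 1" .
    moreover have "Z j k * B0$j$k = \<bar>B0$j$k\<bar>"
    proof (cases "B0$j$k > 0")
      case True
      then have "Z j k = 1" unfolding Z_def using h(2)[OF True] rho_pos by simp
      then show ?thesis using True by simp
    next
      case False
      show ?thesis
      proof (cases "B0$j$k < 0")
        case True
        then have "Z j k = -1" unfolding Z_def using h(3)[OF True] rho_pos by simp
        then show ?thesis using True by simp
      next
        case False2: False
        then have "B0$j$k = 0" using False by linarith
        then show ?thesis by simp
      qed
    qed
    ultimately show ?thesis by blast
  qed
  define \<Delta> where "\<Delta> = B0 - Bstar"
  have supp\<Delta>: "\<Delta>$l$m = 0" if "\<not> (l \<in> Su \<and> m \<in> Sv)" for l m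
  proof -
    have "B0$l$m = 0" using supp0 that by blast
    moreover have "Bstar$l$m = 0" using supp that by blast
    ultimately show ?thesis unfolding \<Delta>_def by simp
  qed
  have KK\<Delta>: "KK A \<Delta> C j k = Dg j k + G$j$k" for j k
    unfolding \<Delta>_def KK_diff Dg_eq G_def by (simp add: KK_mat)
  define RK where "RK j k = (\<Sum>l\<in>Su. \<Sum>m\<in>Sv. A$j$l * \<Delta>$l$m * C$m$k)" for j k
  have KK_RK: "KK A \<Delta> C j k = RK j k" for j k
    unfolding RK_def by (rule KK_supp) (simp add: supp\<Delta>)
  define U where "U l k = (\<Sum>m\<in>Sv. \<Delta>$l$m * C$m$k)" for l k
  define V where "V j m = (\<Sum>l\<in>Su. A$j$l * \<Delta>$l$m)" for j m
  define WS where "WS = (\<Sum>j\<in>Su. \<Sum>k\<in>Sv. (RK j k)^2)"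
  have sA0': "sigma_min_sub A Su \<ge> 0" using sA0 sA_def by simp
  have sC0': "sigma_min_sub C Sv \<ge> 0" using sC0 sC_def by simp
  note fc = frob_chain[OF sA0' sC0' Csym, where D="\<lambda>l m. \<Delta>$l$m"]
  have RK1: "RK j k = (\<Sum>l\<in>Su. A$j$l * U l k)" for j k
    unfolding RK_def U_def using fc(1) .
  have RK2: "RK j k = (\<Sum>m\<in>Sv. V j m * C$m$k)" for j k
    unfolding RK_def V_def using fc(2) .
  have FU: "sA^2 * (\<Sum>l\<in>Su. \<Sum>k\<in>Sv. (U l k)^2) \<le> WS"
    unfolding WS_def RK_def U_def sA_def using fc(3) .
  have FV: "sC^2 * (\<Sum>j\<in>Su. \<Sum>m\<in>Sv. (V j m)^2) \<le> WS"
    unfolding WS_def RK_def V_def sC_def using fc(4) .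
  have FD: "sC^2 * (\<Sum>l\<in>Su. \<Sum>m\<in>Sv. (\<Delta>$l$m)^2) \<le> (\<Sum>l\<in>Su. \<Sum>k\<in>Sv. (U l k)^2)"
    unfolding U_def sC_def using fc(5) .
  have WS0: "WS \<ge> 0" unfolding WS_def by (simp add: sum_nonneg)
  define Qv where "Qv = sqrt WS / (sA * sC)"
  have Qv0: "Qv \<ge> 0" unfolding Qv_def using sA0 sC0 WS0 by simp
  have SD: "sqrt (\<Sum>l\<in>Su. \<Sum>m\<in>Sv. (\<Delta>$l$m)^2) \<le> Qv"
  proof -
    have "(sA * sC)^2 * (\<Sum>l\<in>Su. \<Sum>m\<in>Sv. (\<Delta>$l$m)^2) = sA^2 * (sC^2 * (\<Sum>l\<in>Su. \<Sum>m\<in>Sv. (\<Delta>$l$m)^2))"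
      by (simp add: power_mult_distrib)
    also have "\<dots> \<le> sA^2 * (\<Sum>l\<in>Su. \<Sum>k\<in>Sv. (U l k)^2)" using FD by (intro mult_left_mono) auto
    also have "\<dots> \<le> WS" by (rule FU)
    finally show ?thesis unfolding Qv_def using sA0 sC0
      by (intro sqrt_div_bound) (auto simp: sum_nonneg)
  qed
  have SU: "sqrt (\<Sum>l\<in>Su. \<Sum>k\<in>Sv. (U l k)^2) \<le> sqrt WS / sA"
    using sA0 FU by (intro sqrt_div_bound) (auto simp: sum_nonneg)
  have SV: "sqrt (\<Sum>j\<in>Su. \<Sum>m\<in>Sv. (V j m)^2) \<le> sqrt WS / sC"
    using sC0 FV by (intro sqrt_div_bound) (auto simp: sum_nonneg)
  have rowA: "sqrt (\<Sum>l\<in>Su. (A$j$l)^2) \<le> n2A" if "j \<notin> Su" for j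
    unfolding n2A_def by (rule n2_bound) (use that in simp)
  have colC: "sqrt (\<Sum>m\<in>Sv. (C$m$k)^2) \<le> n2C" if "k \<notin> Sv" for k
  proof -
    have "sqrt (\<Sum>m\<in>Sv. (C$m$k)^2) = sqrt (\<Sum>m\<in>Sv. (C$k$m)^2)" by (simp add: Csym[of _ k])
    also have "\<dots> \<le> n2C" unfolding n2C_def by (rule n2_bound) (use that in simp)
    finally show ?thesis .
  qed
  have Ucol: "sqrt (\<Sum>l\<in>Su. (U l k)^2) \<le> sqrt WS / sA" if "k \<in> Sv" for k
  proof -
    have "(\<Sum>l\<in>Su. (U l k)^2) \<le> (\<Sum>l\<in>Su. \<Sum>k'\<in>Sv. (U l k')^2)"
      by (intro sum_mono member_le_sum) (use that in auto)
    then have "sqrt (\<Sum>l\<in>Su. (U l k)^2) \<le> sqrt (\<Sum>l\<in>Su. \<Sum>k'\<in>Sv. (U l k')^2)" by (rule real_sqrt_le_mono)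
    then show ?thesis using SU by (rule order_trans)
  qed
  have Vrow: "sqrt (\<Sum>m\<in>Sv. (V j m)^2) \<le> sqrt WS / sC" if "j \<in> Su" for j
  proof -
    have "(\<Sum>m\<in>Sv. (V j m)^2) \<le> (\<Sum>j'\<in>Su. \<Sum>m\<in>Sv. (V j' m)^2)"
      by (rule member_le_sum) (use that in \<open>auto simp: sum_nonneg\<close>)
    then have "sqrt (\<Sum>m\<in>Sv. (V j m)^2) \<le> sqrt (\<Sum>j'\<in>Su. \<Sum>m\<in>Sv. (V j' m)^2)" by (rule real_sqrt_le_mono)
    then show ?thesis using SV by (rule order_trans)
  qed
  have Ucol2: "sqrt (\<Sum>l\<in>Su. (U l k)^2) \<le> Qv * sqrt (\<Sum>m\<in>Sv. (C$m$k)^2)" for k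
  proof -
    have "(U l k)^2 \<le> (\<Sum>m\<in>Sv. (\<Delta>$l$m)^2) * (\<Sum>m\<in>Sv. (C$m$k)^2)" for l
      unfolding U_def by (rule Cauchy_Schwarz_ineq_sum)
    then have "(\<Sum>l\<in>Su. (U l k)^2) \<le> (\<Sum>l\<in>Su. \<Sum>m\<in>Sv. (\<Delta>$l$m)^2) * (\<Sum>m\<in>Sv. (C$m$k)^2)"
      unfolding sum_distrib_right by (rule sum_mono)
    then have "sqrt (\<Sum>l\<in>Su. (U l k)^2) \<le> sqrt (\<Sum>l\<in>Su. \<Sum>m\<in>Sv. (\<Delta>$l$m)^2) * sqrt (\<Sum>m\<in>Sv. (C$m$k)^2)"
      unfolding real_sqrt_mult[symmetric] by (rule real_sqrt_le_mono)
    also have "\<dots> \<le> Qv * sqrt (\<Sum>m\<in>Sv. (C$m$k)^2)" using SD by (intro mult_right_mono) (auto simp: sum_nonneg)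
    finally show ?thesis .
  qed
  have offRK: "\<bar>RK j k\<bar> \<le> \<tau> * Qv" if off: "\<not> (j \<in> Su \<and> k \<in> Sv)" for j k
  proof (cases "j \<in> Su")
    case False
    have "\<bar>RK j k\<bar> \<le> sqrt (\<Sum>l\<in>Su. (A$j$l)^2) * sqrt (\<Sum>l\<in>Su. (U l k)^2)"
      unfolding RK1 by (rule CS_abs)
    also have "\<dots> \<le> n2A * sqrt (\<Sum>l\<in>Su. (U l k)^2)" using rowA[OF False] by (intro mult_right_mono) (auto simp: sum_nonneg)
    finally have h1: "\<bar>RK j k\<bar> \<le> n2A * sqrt (\<Sum>l\<in>Su. (U l k)^2)" .
    show ?thesis
    proof (cases "k \<in> Sv")
      case True
      have "sqrt WS / sA = sC * Qv" unfolding Qv_def using sC0 by simp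
      also have "\<dots> \<le> opC * Qv" using opC Qv0 by (intro mult_right_mono) (auto simp: sum_nonneg)
      finally have "sqrt (\<Sum>l\<in>Su. (U l k)^2) \<le> opC * Qv" using Ucol[OF True] by linarith
      then have "n2A * sqrt (\<Sum>l\<in>Su. (U l k)^2) \<le> n2A * (opC * Qv)" using n2A0 by (rule mult_left_mono)
      then have "\<bar>RK j k\<bar> \<le> n2A * (opC * Qv)" using h1 by linarith
      also have "\<dots> \<le> \<tau> * Qv" using tau2 Qv0 by (simp add: mult.assoc[symmetric] mult_right_mono)
      finally show ?thesis .
    next
      case False2: False
      have "sqrt (\<Sum>l\<in>Su. (U l k)^2) \<le> Qv * n2C"
      proof -
        have "Qv * sqrt (\<Sum>m\<in>Sv. (C$m$k)^2) \<le> Qv * n2C" using colC[OF False2] Qv0 by (rule mult_left_mono)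
        then show ?thesis using Ucol2[of k] by linarith
      qed
      then have "n2A * sqrt (\<Sum>l\<in>Su. (U l k)^2) \<le> n2A * (Qv * n2C)" using n2A0 by (rule mult_left_mono)
      then have "\<bar>RK j k\<bar> \<le> n2A * (Qv * n2C)" using h1 by linarith
      also have "\<dots> = (n2A * n2C) * Qv" by simp
      also have "\<dots> \<le> \<tau> * Qv" using tau1 Qv0 by (rule mult_right_mono)
      finally show ?thesis .
    qed
  next
    case True
    then have kS: "k \<notin> Sv" using off by blast
    have "\<bar>RK j k\<bar> \<le> sqrt (\<Sum>m\<in>Sv. (V j m)^2) * sqrt (\<Sum>m\<in>Sv. (C$m$k)^2)"
      unfolding RK2 by (rule CS_abs)
    also have "\<dots> \<le> (sqrt WS / sC) * n2C" using Vrow[OF True] colC[OF kS] WS0 sC0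
      by (intro mult_mono) (auto intro!: sum_nonneg)
    also have "sqrt WS / sC = sA * Qv" unfolding Qv_def using sA0 by simp
    also have "sA * Qv * n2C \<le> opA * Qv * n2C" using opA Qv0 n2C0 by (intro mult_right_mono) (auto simp: sum_nonneg)
    also have "\<dots> = (opA * n2C) * Qv" by simp
    also have "\<dots> \<le> \<tau> * Qv" using tau3 Qv0 by (rule mult_right_mono)
    finally show ?thesis .
  qed
  have WSb: "WS \<le> su * sv * (\<rho> + g)^2"
    unfolding WS_def su_def sv_def
  proof (rule sum_sq_bound)
    fix j k assume jk: "j \<in> Su" "k \<in> Sv"
    have "\<bar>RK j k\<bar> \<le> \<rho> + g" using kkt[OF jk] Gb[of j k] KK\<Delta>[of j k] KK_RK[of j k] by linarith
    then have "\<bar>RK j k\<bar>^2 \<le> (\<rho> + g)^2" by (rule power_mono) simp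
    then show "(RK j k)^2 \<le> (\<rho> + g)^2" by simp
  qed
  have QvR: "\<tau> * Qv \<le> R"
  proof -
    have "sqrt WS \<le> sqrt (su * sv * (\<rho> + g)^2)" using WSb by simp
    also have "\<dots> = sqrt (su * sv) * (\<rho> + g)" using rho_pos g0 by (simp add: real_sqrt_mult)
    finally have "Qv \<le> sqrt (su * sv) * (\<rho> + g) / (sA * sC)" unfolding Qv_def using sA0 sC0
      by (simp add: divide_right_mono)
    then have "\<tau> * Qv \<le> \<tau> * (sqrt (su * sv) * (\<rho> + g) / (sA * sC))" using tau0 by (rule mult_left_mono)
    then show ?thesis unfolding R_def by (simp add: algebra_simps)
  qed
  have Zoff: "\<bar>Z j k\<bar> \<le> 1 - R / \<rho>" if off: "\<not> (j \<in> Su \<and> k \<in> Sv)" for j k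
  proof -
    have "Dg j k = RK j k - G$j$k" using KK\<Delta>[of j k] KK_RK[of j k] by simp
    then have "\<bar>Dg j k\<bar> \<le> \<rho> - R" using offRK[OF off] QvR Gb[of j k] keyineq by linarith
    then have "\<bar>Dg j k\<bar> / \<rho> \<le> (\<rho> - R) / \<rho>" using rho_pos by (simp add: divide_right_mono)
    moreover have "\<bar>Z j k\<bar> = \<bar>Dg j k\<bar> / \<rho>" unfolding Z_def using rho_pos by simp
    moreover have "(\<rho> - R) / \<rho> = 1 - R / \<rho>" using rho_pos by (simp add: field_simps)
    ultimately show ?thesis by simp
  qed
  have RrhO: "R / \<rho> \<ge> 0" using R0 rho_pos by simp
  have Zall: "\<bar>Z j k\<bar> \<le> 1" for j k
  proof (cases "j \<in> Su \<and> k \<in> Sv")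
    case True then show ?thesis using ZS by blast
  next
    case False then show ?thesis using Zoff[OF False] RrhO by linarith
  qed
  have ZB0: "Z j k * B0$j$k = \<bar>B0$j$k\<bar>" for j k
  proof (cases "j \<in> Su \<and> k \<in> Sv")
    case True then show ?thesis using ZS by blast
  next
    case False then have "B0$j$k = 0" using supp0 by blast
    then show ?thesis by simp
  qed
  have Zle: "Z j k * b \<le> \<bar>b\<bar>" for j k b
  proof -
    have "Z j k * b \<le> \<bar>Z j k * b\<bar>" by (rule abs_ge_self)
    also have "\<dots> = \<bar>Z j k\<bar> * \<bar>b\<bar>" by (rule abs_mult)
    also have "\<dots> \<le> 1 * \<bar>b\<bar>" using Zall[of j k] by (intro mult_right_mono) auto
    finally show ?thesis by simp
  qed
  define slack where "slack B = (\<Sum>j\<in>UNIV. \<Sum>k\<in>UNIV. \<bar>B$j$k\<bar> - Z j k * B$j$k)" for B :: "real^'q^'p"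
  have slack0: "slack B \<ge> 0" for B
  proof -
    have *: "0 \<le> \<bar>B$j$k\<bar> - Z j k * B$j$k" for j k using Zle[of j k "B$j$k"] by linarith
    show ?thesis unfolding slack_def by (intro sum_nonneg) (rule *)
  qed
  define Q where "Q B = (\<Sum>i\<in>UNIV. \<Sum>i'\<in>UNIV. (PP X Y (B - B0) i i')^2)" for B :: "real^'q^'p"
  have Q0: "Q B \<ge> 0" for B unfolding Q_def by (simp add: sum_nonneg)
  have fB: "f B = f B0 + 1/2 * Q B + \<rho> * slack B" for B
  proof -
    have "(\<Sum>j\<in>UNIV. \<Sum>k\<in>UNIV. (B - B0)$j$k * Dg j k) = (\<Sum>j\<in>UNIV. \<Sum>k\<in>UNIV. \<rho> * \<bar>B0$j$k\<bar> - \<rho> * (Z j k * B$j$k))"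
    proof (intro sum.cong refl)
      fix j k
      have "(B - B0)$j$k * Dg j k = \<rho> * (Z j k * B0$j$k) - \<rho> * (Z j k * B$j$k)"
        unfolding Dg_Z by (simp add: algebra_simps)
      then show "(B - B0)$j$k * Dg j k = \<rho> * \<bar>B0$j$k\<bar> - \<rho> * (Z j k * B$j$k)"
        unfolding ZB0 .
    qed
    also have "\<dots> = \<rho> * l1_entries B0 - \<rho> * (\<Sum>j\<in>UNIV. \<Sum>k\<in>UNIV. Z j k * B$j$k)"
      unfolding l1_entries_def by (simp add: sum_subtractf sum_distrib_left)
    finally have lin: "(\<Sum>j\<in>UNIV. \<Sum>k\<in>UNIV. (B - B0)$j$k * Dg j k) = \<dots>" .
    have sl: "slack B = l1_entries B - (\<Sum>j\<in>UNIV. \<Sum>k\<in>UNIV. Z j k * B$j$k)"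
      unfolding slack_def l1_entries_def by (simp add: sum_subtractf)
    show ?thesis using expn[of B] unfolding lin sl Q_def by (simp add: algebra_simps)
  qed
  have glob: "f B0 \<le> f B" for B
  proof -
    have "0 \<le> \<rho> * slack B" using rho_pos slack0[of B] by simp
    then show ?thesis using fB[of B] Q0[of B] by linarith
  qed
  have uniq: "B = B0" if hB: "\<forall>B'. f B \<le> f B'" for B
  proof -
    have "f B \<le> f B0" using hB by blast
    then have le0: "1/2 * Q B + \<rho> * slack B \<le> 0" using fB[of B] by linarith
    have rs: "\<rho> * slack B \<ge> 0" using rho_pos slack0[of B] by simp
    have Qz: "Q B \<le> 0" using le0 rs by linarith
    have "\<rho> * slack B \<le> 0" using le0 Q0[of B] by linarith
    then have sz: "slack B \<le> 0" using rho_pos by (simp add: mult_le_0_iff)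
    have PPz: "PP X Y (B - B0) i i' = 0" for i i'
    proof -
      have "(PP X Y (B - B0) i i')^2 = 0"
        using sum2_zero[of UNIV UNIV "\<lambda>i i'. (PP X Y (B - B0) i i')^2"] Qz unfolding Q_def by simp
      then show ?thesis by simp
    qed
    have absZ: "\<bar>B$j$k\<bar> = Z j k * B$j$k" for j k
    proof -
      have "\<bar>B$j$k\<bar> - Z j k * B$j$k = 0"
        using sum2_zero[of UNIV UNIV "\<lambda>j k. \<bar>B$j$k\<bar> - Z j k * B$j$k"] sz Zle unfolding slack_def by simp
      then show ?thesis by simp
    qed
    define \<Delta>2 where "\<Delta>2 = B - B0"
    have KK2: "KK A \<Delta>2 C j k = 0" for j k
      unfolding A_def C_def grad_identity[symmetric] \<Delta>2_def PPz by simp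
    have onS_gen: "\<Delta>2$l$m = 0"
      if z: "\<And>j k. j \<in> Su \<Longrightarrow> k \<in> Sv \<Longrightarrow> (\<Sum>l\<in>Su. \<Sum>m\<in>Sv. A$j$l * \<Delta>2$l$m * C$m$k) = 0"
        and lm: "l \<in> Su" "m \<in> Sv" for l m
      using frob_zero[OF sA0[unfolded sA_def] sC0[unfolded sC_def] Csym, where D="\<lambda>l m. \<Delta>2$l$m", OF z lm] .
    have main: "(\<forall>j k. \<not> (j \<in> Su \<and> k \<in> Sv) \<longrightarrow> B$j$k = 0) \<and> (\<forall>l\<in>Su. \<forall>m\<in>Sv. \<Delta>2$l$m = 0)"
    proof (cases "\<tau> > 0")
      case True
      have "sqrt (su * sv) > 0" using su1 sv1 by simp
      then have Rpos: "R > 0" unfolding R_def using True g0 rho_pos sA0 sC0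
        by (intro divide_pos_pos mult_pos_pos) auto
      have offB: "B$j$k = 0" if off: "\<not> (j \<in> Su \<and> k \<in> Sv)" for j k
      proof (rule ccontr)
        assume nz: "B$j$k \<noteq> 0"
        have "R / \<rho> > 0" using Rpos rho_pos by simp
        then have "\<bar>Z j k\<bar> < 1" using Zoff[OF off] by linarith
        then have "\<bar>Z j k\<bar> * \<bar>B$j$k\<bar> < 1 * \<bar>B$j$k\<bar>" using nz by (intro mult_strict_right_mono) auto
        moreover have "\<bar>B$j$k\<bar> \<le> \<bar>Z j k\<bar> * \<bar>B$j$k\<bar>" using abs_ge_self[of "Z j k * B$j$k"] abs_mult[of "Z j k" "B$j$k"] absZ[of j k] by linarith
        ultimately show False by simp
      qed
      have "\<Delta>2$l$m = 0" if "l \<in> Su" "m \<in> Sv" for l m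
      proof (rule onS_gen[OF _ that])
        fix j k assume "j \<in> Su" "k \<in> Sv"
        have "KK A \<Delta>2 C j k = (\<Sum>l\<in>Su. \<Sum>m\<in>Sv. A$j$l * \<Delta>2$l$m * C$m$k)"
        proof (rule KK_supp)
          fix l m assume "\<not> (l \<in> Su \<and> m \<in> Sv)"
          then have "B$l$m = 0" "B0$l$m = 0" using offB supp0 by blast+
          then have "\<Delta>2$l$m = 0" unfolding \<Delta>2_def by simp
          then show "A$j$l * \<Delta>2$l$m * C$m$k = 0" by simp
        qed
        then show "(\<Sum>l\<in>Su. \<Sum>m\<in>Sv. A$j$l * \<Delta>2$l$m * C$m$k) = 0" using KK2 by simp
      qed
      then show ?thesis using offB by blast
    next
      case False
      then have tz: "\<tau> \<le> 0" by simp
      have opC0: "opC > 0" using opC sC0 by linarith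
      have opA0: "opA > 0" using opA sA0 by linarith
      have "n2A * opC \<le> 0" using tau2 tz by linarith
      then have "n2A \<le> 0" using opC0 by (simp add: mult_le_0_iff)
      have A0: "A$j$l = 0" if "j \<notin> Su" "l \<in> Su" for j l
        by (rule n2_zero[OF \<open>n2A \<le> 0\<close>[unfolded n2A_def]]) (use that in auto)
      have "opA * n2C \<le> 0" using tau3 tz by linarith
      then have "n2C \<le> 0" using opA0 by (simp add: mult_le_0_iff)
      have C0: "C$k$m = 0" if "k \<notin> Sv" "m \<in> Sv" for k m
        by (rule n2_zero[OF \<open>n2C \<le> 0\<close>[unfolded n2C_def]]) (use that in auto)
      have onS: "\<Delta>2$l$m = 0" if "l \<in> Su" "m \<in> Sv" for l m
      proof (rule onS_gen[OF _ that])
        fix j k assume jk: "j \<in> Su" "k \<in> Sv"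
        have "KK A \<Delta>2 C j k = (\<Sum>l\<in>Su. \<Sum>m\<in>Sv. A$j$l * \<Delta>2$l$m * C$m$k)"
        proof (rule KK_supp)
          fix l m assume lm: "\<not> (l \<in> Su \<and> m \<in> Sv)"
          show "A$j$l * \<Delta>2$l$m * C$m$k = 0"
          proof (cases "l \<in> Su")
            case True
            then have "m \<notin> Sv" using lm by blast
            then have "C$m$k = 0" using C0 jk by blast
            then show ?thesis by simp
          next
            case False
            then have "A$j$l = 0" using A0[OF False jk(1)] Asym[of j l] by simp
            then show ?thesis by simp
          qed
        qed
        then show "(\<Sum>l\<in>Su. \<Sum>m\<in>Sv. A$j$l * \<Delta>2$l$m * C$m$k) = 0" using KK2 by simp
      qed
      have MZ: "M$j$k = \<rho> * Z j k" if off: "\<not> (j \<in> Su \<and> k \<in> Sv)" for j k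
      proof -
        have "KK A B0 C j k = (\<Sum>l\<in>Su. \<Sum>m\<in>Sv. A$j$l * B0$l$m * C$m$k)"
          by (rule KK_supp) (use supp0 in auto)
        also have "\<dots> = 0"
        proof (intro sum.neutral ballI)
          fix l m assume lm: "l \<in> Su" "m \<in> Sv"
          show "A$j$l * B0$l$m * C$m$k = 0"
          proof (cases "j \<in> Su")
            case False then show ?thesis using A0[OF False lm(1)] by simp
          next
            case True then have "k \<notin> Sv" using off by blast
            then show ?thesis using C0[OF _ lm(2)] Csym[of m k] by simp
          qed
        qed
        finally have "Dg j k = - M$j$k" using Dg_eq[of j k] by simp
        then show ?thesis using Dg_Z[of j k] by simp
      qed
      have Msum: "(\<Sum>j\<in>UNIV. \<Sum>k\<in>UNIV. \<Delta>2$j$k * M$j$k) = 0"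
      proof -
        have "(\<Sum>i\<in>UNIV. \<Sum>i'\<in>UNIV. (if i = i' then 1 else 0) * PP X Y \<Delta>2 i i')
          = (\<Sum>j\<in>UNIV. \<Sum>k\<in>UNIV. \<Delta>2$j$k * ((\<Sum>i\<in>UNIV. \<Sum>i'\<in>UNIV. X$i$j * Y$i'$k * (if i = i' then 1 else 0)) / real CARD('n)))"
          by (rule swap_lemma)
        also have "\<dots> = (\<Sum>j\<in>UNIV. \<Sum>k\<in>UNIV. \<Delta>2$j$k * M$j$k)"
          unfolding M_identity M_def ..
        finally show ?thesis unfolding \<Delta>2_def PPz by simp
      qed
      have trm: "\<Delta>2$j$k * M$j$k = (if j \<in> Su \<and> k \<in> Sv then 0 else \<rho> * \<bar>B$j$k\<bar>)" for j k
      proof (cases "j \<in> Su \<and> k \<in> Sv")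
        case True then show ?thesis using onS by simp
      next
        case False
        then have "B0$j$k = 0" using supp0 by blast
        then have "\<Delta>2$j$k = B$j$k" unfolding \<Delta>2_def by simp
        then have "\<Delta>2$j$k * M$j$k = \<rho> * (Z j k * B$j$k)" using MZ[OF False] by simp
        also have "\<dots> = \<rho> * \<bar>B$j$k\<bar>" using absZ[of j k] by simp
        finally show ?thesis unfolding if_not_P[OF False] .
      qed
      have offB: "B$j$k = 0" if off: "\<not> (j \<in> Su \<and> k \<in> Sv)" for j k
      proof -
        have s0: "(\<Sum>j\<in>UNIV. \<Sum>k\<in>UNIV. (if j \<in> Su \<and> k \<in> Sv then 0 else \<rho> * \<bar>B$j$k\<bar>)) \<le> 0"
          using Msum unfolding trm by simp
        have "(if j \<in> Su \<and> k \<in> Sv then 0 else \<rho> * \<bar>B$j$k\<bar>) = 0"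
          using sum2_zero[of UNIV UNIV "\<lambda>j k. if j \<in> Su \<and> k \<in> Sv then 0 else \<rho> * \<bar>B$j$k\<bar>", OF _ _ s0] rho_pos by simp
        then show ?thesis using off rho_pos by simp
      qed
      show ?thesis using onS offB by blast
    qed
    show "B = B0"
    proof (rule vec_eq_iff[THEN iffD2], intro allI)
      fix j show "B$j = B0$j"
      proof (rule vec_eq_iff[THEN iffD2], intro allI)
        fix k show "B$j$k = B0$j$k"
        proof (cases "j \<in> Su \<and> k \<in> Sv")
          case True then show ?thesis using main unfolding \<Delta>2_def by simp
        next
          case False
          then have "B$j$k = 0" using main by blast
          moreover have "B0$j$k = 0" using False supp0 by blast
          ultimately show ?thesis by simp
        qed
      qed
    qed
  qed
  have ex: "\<exists>!B. \<forall>B'. f B \<le> f B'"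
  proof (rule ex1I[of _ B0])
    show "\<forall>B'. f B0 \<le> f B'" using glob by blast
    fix y assume "\<forall>B'. f y \<le> f B'"
    then show "y = B0" by (rule uniq)
  qed
  have sp: "\<forall>B. (\<forall>B'. f B \<le> f B') \<longrightarrow> (\<forall>i j. B $ i $ j \<noteq> 0 \<longrightarrow> i \<in> Su \<and> j \<in> Sv)"
  proof (intro allI impI)
    fix B i j assume h1: "\<forall>B'. f B \<le> f B'" and h2: "B $ i $ j \<noteq> 0"
    have "B = B0" using h1 by (rule uniq)
    then have "B0 $ i $ j \<noteq> 0" using h2 by simp
    then show "i \<in> Su \<and> j \<in> Sv" using supp0 by blast
  qed
  show ?thesis using ex sp unfolding f_def by (rule conjI)
qed

end
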